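(* The equation $x+y=z$ with $x,y,z\in\mathcal{B}_{2,1}$ and $x\le y$ has exactly four solutions: $$x=2-\sqrt3=[3,\overline{1,2}],\ y=\tfrac{\sqrt3-1}{2}=[\overline{2,1}],\ z=\tfrac{3-\sqrt3}{2}=[1,1,1,\overline{2,1}];$$ $$x=y=\tfrac{\sqrt3-1}{2}=[\overline{2,1}],\ z=\sqrt3-1=[\overline{1,2}];$$ $$x=y=\tfrac{2-\sqrt2}{2}=[3,\overline{2}],\ z=2-\sqrt2=[1,1,\overline{2}];$$ $$x=\tfrac{2-\sqrt2}{2}=[3,\overline{2}],\ y=\sqrt2-1=[\overline{2}],\ z=\tfrac{\sqrt2}{2}=[1,\overline{2}].$$
   Context: For irrational $x\in(0,1)$, $x=[a_1(x),a_2(x),\dots]$ denotes its simple continued fraction expansion; an overline denotes a periodically repeated block. For a positive integer $B$ and $j\ge0$, $\mathcal{B}_{B,j}$ is the set of irrational $x\in(0,1)$ with $a_k(x)\le B+1$ for all $k\le j$ and $a_k(x)\le B$ for all $k>j$. Thus $\mathcal{B}_{2,1}$ consists of the irrationals $x\in(0,1)$ with $a_1(x)\le3$ and $a_k(x)\le2$ for all $k\ge2$. *)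

theory Defs
  imports "HOL-Analysis.Analysis"
begin

definition gauss :: "real \<Rightarrow> real" where
  "gauss x = 1 / x - of_int \<lfloor>1 / x\<rfloor>"

definition cf_digit :: "real \<Rightarrow> nat \<Rightarrow> int" where
  "cf_digit x k = \<lfloor>1 / ((gauss ^^ (k - 1)) x)\<rfloor>"

definition bounded_cf :: "nat \<Rightarrow> nat \<Rightarrow> real set" where
  "bounded_cf B j = {x. x \<notin> \<rat> \<and> 0 < x \<and> x < 1 \<and>
      (\<forall>k. 1 \<le> k \<and> k \<le> j \<longrightarrow> cf_digit x k \<le> int B + 1) \<and>
      (\<forall>k. k > j \<longrightarrow> cf_digit x k \<le> int B)}"

end

theory Submission
  imports Defs "HOL-Computational_Algebra.Primes"
begin


lemma sqrt_prime_irr: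
  assumes p: "prime (p::nat)" shows "sqrt (real p) \<notin> \<rat>"
proof
  assume "sqrt (real p) \<in> \<rat>"
  then obtain m n :: nat where n: "n \<noteq> 0" and e: "\<bar>sqrt (real p)\<bar> = real m / real n" and cop: "coprime m n"
    by (rule Rats_abs_nat_div_natE)
  have "real m = sqrt (real p) * real n" using e n by (simp add: field_simps)
  then have "real (m*m) = real (p * (n*n))" by (simp add: algebra_simps)
  then have eq: "m*m = p*(n*n)" by (simp only: of_nat_eq_iff)
  then have "p dvd m*m" by simp
  then have "p dvd m" using p prime_dvd_mult_nat by blast
  then obtain k where k: "m = p*k" by blast
  then have "p*(p*(k*k)) = p*(n*n)" using eq by (simp add: algebra_simps)
  then have "p*(k*k) = n*n" using p by (simp add: prime_gt_0_nat)
  then have "p dvd n*n" by (metis dvd_triv_left)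
  then have "p dvd n" using p prime_dvd_mult_nat by blast
  then show False using cop \<open>p dvd m\<close> p
    by (metis coprime_common_divisor_nat not_prime_1)
qed



definition ES :: "real set" where
  "ES = {x. x \<notin> \<rat> \<and> 0 < x \<and> x < 1 \<and> (\<forall>k\<ge>1. cf_digit x k \<le> 2)}"

lemma decomp:
  assumes irr: "x \<notin> \<rat>" and x0: "0 < x" and x1: "x < 1"
  shows "1 \<le> \<lfloor>1/x\<rfloor> \<and> gauss x \<notin> \<rat> \<and> 0 < gauss x \<and> gauss x < 1
     \<and> x = 1 / (of_int \<lfloor>1/x\<rfloor> + gauss x) \<and> cf_digit x 1 = \<lfloor>1/x\<rfloor>
     \<and> (\<forall>k\<ge>1. cf_digit x (Suc k) = cf_digit (gauss x) k)"
proof -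
  have gx: "1/x > 1" using x0 x1 by (simp add: field_simps)
  then have a1: "1 \<le> \<lfloor>1/x\<rfloor>" by linarith
  have ge: "0 \<le> gauss x" "gauss x < 1" unfolding gauss_def by linarith+
  have irr1: "1/x \<notin> \<rat>"
  proof
    assume "1/x \<in> \<rat>" from Rats_divide[OF Rats_1 this] have "1/(1/x) \<in> \<rat>" .
    then show False using irr by simp
  qed
  have girr: "gauss x \<notin> \<rat>"
  proof
    assume "gauss x \<in> \<rat>"
    then have "gauss x + of_int \<lfloor>1/x\<rfloor> \<in> \<rat>" by simp
    then show False using irr1 unfolding gauss_def by simp
  qed
  have g0: "0 < gauss x" using ge girr by (metis Rats_0 order_le_less)
  have xe: "x = 1 / (of_int \<lfloor>1/x\<rfloor> + gauss x)" unfolding gauss_def using x0 by simp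
  have d1: "cf_digit x 1 = \<lfloor>1/x\<rfloor>" unfolding cf_digit_def by simp
  have dk: "cf_digit x (Suc k) = cf_digit (gauss x) k" if kk: "k \<ge> 1" for k
  proof -
    obtain j where j: "k = Suc j" using kk by (cases k) auto
    show ?thesis unfolding cf_digit_def j by (simp add: funpow_Suc_right del: funpow.simps)
  qed
  show ?thesis using a1 girr g0 ge xe d1 dk by blast
qed

lemma compose:
  fixes a :: int
  assumes girr: "g \<notin> \<rat>" and g0: "0 < g" and g1: "g < 1" and a: "1 \<le> a"
  defines "x \<equiv> 1 / (of_int a + g)"
  shows "x \<notin> \<rat> \<and> 0 < x \<and> x < 1 \<and> \<lfloor>1/x\<rfloor> = a \<and> gauss x = g"
proof -
  have pos: "of_int a + g > 1" using a g0 by linarith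
  have x0: "0 < x" "x < 1" unfolding x_def using pos by (auto simp: field_simps)
  have ix: "1/x = of_int a + g" unfolding x_def using pos by simp
  have "\<lfloor>of_int a + g\<rfloor> = a"
  proof (rule floor_unique)
    show "of_int a \<le> of_int a + g" using g0 by simp
    show "of_int a + g < of_int a + 1" using g1 by simp
  qed
  then have fl: "\<lfloor>1/x\<rfloor> = a" using ix by simp
  have ga: "gauss x = g" unfolding gauss_def fl by (simp add: ix)
  have irr: "x \<notin> \<rat>"
  proof
    assume "x \<in> \<rat>" then have "1/x \<in> \<rat>" by simp
    then have "1/x - of_int a \<in> \<rat>" by simp
    then show False using girr unfolding ix by simp
  qed
  show ?thesis using irr x0 fl ga by blast
qed

lemma ES_decomp:
  assumes "x \<in> ES"
  shows "\<exists>a g. (a = 1 \<or> a = (2::real)) \<and> g \<in> ES \<and> x = 1/(a+g)"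
proof -
  from assms have irr: "x \<notin> \<rat>" "0 < x" "x < 1" and dg: "\<forall>k\<ge>1. cf_digit x k \<le> 2"
    unfolding ES_def by auto
  note D = decomp[OF irr]
  have "cf_digit x 1 \<le> 2" using dg by simp
  then have f2: "\<lfloor>1/x\<rfloor> \<le> 2" using D by simp
  have f1: "1 \<le> \<lfloor>1/x\<rfloor>" using D by blast
  have a: "\<lfloor>1/x\<rfloor> = 1 \<or> \<lfloor>1/x\<rfloor> = 2" using f1 f2 by presburger
  have "\<forall>k\<ge>1. cf_digit (gauss x) k \<le> 2"
  proof (intro allI impI)
    fix k :: nat assume "1 \<le> k"
    then have "cf_digit (gauss x) k = cf_digit x (Suc k)" using D by simp
    also have "\<dots> \<le> 2" using dg \<open>1 \<le> k\<close> by simp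
    finally show "cf_digit (gauss x) k \<le> 2" .
  qed
  then have "gauss x \<in> ES" unfolding ES_def using D by blast
  show ?thesis
    apply (rule exI[of _ "of_int \<lfloor>1/x\<rfloor>"], rule exI[of _ "gauss x"])
    using a D \<open>gauss x \<in> ES\<close> by auto
qed

lemma B_decomp:
  assumes "x \<in> bounded_cf 2 1"
  shows "\<exists>a g. (a = 1 \<or> a = 2 \<or> a = (3::real)) \<and> g \<in> ES \<and> x = 1/(a+g)"
proof -
  from assms have irr: "x \<notin> \<rat>" "0 < x" "x < 1" and dg: "\<forall>k>1. cf_digit x k \<le> 2"
    and d1: "cf_digit x 1 \<le> 3"
    unfolding bounded_cf_def by auto
  note D = decomp[OF irr]
  have f2: "\<lfloor>1/x\<rfloor> \<le> 3" using D d1 by simp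
  have f1: "1 \<le> \<lfloor>1/x\<rfloor>" using D by blast
  have a: "\<lfloor>1/x\<rfloor> = 1 \<or> \<lfloor>1/x\<rfloor> = 2 \<or> \<lfloor>1/x\<rfloor> = 3" using f1 f2 by presburger
  have "\<forall>k\<ge>1. cf_digit (gauss x) k \<le> 2"
  proof (intro allI impI)
    fix k :: nat assume "1 \<le> k"
    then have "cf_digit (gauss x) k = cf_digit x (Suc k)" using D by simp
    also have "\<dots> \<le> 2" using dg \<open>1 \<le> k\<close> by simp
    finally show "cf_digit (gauss x) k \<le> 2" .
  qed
  then have "gauss x \<in> ES" unfolding ES_def using D by blast
  show ?thesis
    apply (rule exI[of _ "of_int \<lfloor>1/x\<rfloor>"], rule exI[of _ "gauss x"])
    using a D \<open>gauss x \<in> ES\<close> by auto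
qed

lemma ES_compose:
  assumes "g \<in> ES" "a = 1 \<or> a = (2::int)"
  shows "1/(of_int a + g) \<in> ES"
proof -
  from assms have irr: "g \<notin> \<rat>" "0 < g" "g < 1" and dg: "\<forall>k\<ge>1. cf_digit g k \<le> 2"
    unfolding ES_def by auto
  have a1: "1 \<le> a" using assms by auto
  note C = compose[OF irr a1]
  define x where "x = 1/(of_int a + g)"
  have xi: "x \<notin> \<rat>" "0 < x" "x < 1" using C unfolding x_def by auto
  note D = decomp[OF xi]
  have "\<forall>k\<ge>1. cf_digit x k \<le> 2"
  proof (intro allI impI)
    fix k :: nat assume k: "1 \<le> k"
    show "cf_digit x k \<le> 2"
    proof (cases "k = 1")
      case True then show ?thesis using D C assms unfolding x_def by auto
    next
      case False
      then obtain j where j: "k = Suc j" "j \<ge> 1" using k by (cases k) auto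
      then show ?thesis using D C dg unfolding x_def by auto
    qed
  qed
  then show ?thesis using xi unfolding ES_def x_def by auto
qed

lemma B_compose:
  assumes "g \<in> ES" "a = 1 \<or> a = 2 \<or> a = (3::int)"
  shows "1/(of_int a + g) \<in> bounded_cf 2 1"
proof -
  from assms have irr: "g \<notin> \<rat>" "0 < g" "g < 1" and dg: "\<forall>k\<ge>1. cf_digit g k \<le> 2"
    unfolding ES_def by auto
  have a1: "1 \<le> a" using assms by auto
  note C = compose[OF irr a1]
  define x where "x = 1/(of_int a + g)"
  have xi: "x \<notin> \<rat>" "0 < x" "x < 1" using C unfolding x_def by auto
  note D = decomp[OF xi]
  have 1: "cf_digit x 1 \<le> 3" using D C assms unfolding x_def by auto
  have 2: "\<forall>k>1. cf_digit x k \<le> 2"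
  proof (intro allI impI)
    fix k :: nat assume k: "1 < k"
    then obtain j where j: "k = Suc j" "j \<ge> 1" by (cases k) auto
    then show "cf_digit x k \<le> 2" using D C dg unfolding x_def by auto
  qed
  have 0: "\<forall>k. 1 \<le> k \<and> k \<le> 1 \<longrightarrow> cf_digit x k \<le> int 2 + 1"
  proof (intro allI impI)
    fix k :: nat assume "1 \<le> k \<and> k \<le> 1"
    then have "k = 1" by simp
    then show "cf_digit x k \<le> int 2 + 1" using 1 by simp
  qed
  show ?thesis using xi 0 2 unfolding bounded_cf_def x_def by auto
qed

lemma ES_sub_B: "ES \<subseteq> bounded_cf 2 1"
proof
  fix x assume "x \<in> ES"
  then show "x \<in> bounded_cf 2 1" unfolding ES_def bounded_cf_def by auto
qed

lemma ES_coind: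
  assumes S: "\<And>t. t \<in> S \<Longrightarrow> t \<notin> \<rat> \<and> 0 < t \<and> t < 1 \<and> \<lfloor>1/t\<rfloor> \<le> 2 \<and> gauss t \<in> S"
    and t: "t \<in> S"
  shows "t \<in> ES"
proof -
  have it: "(gauss ^^ n) t \<in> S" for n
  proof (induction n)
    case 0 then show ?case using t by simp
  next
    case (Suc n) then show ?case using S[OF Suc.IH] by simp
  qed
  have "cf_digit t k \<le> 2" for k
    unfolding cf_digit_def using S[OF it] by blast
  then show ?thesis using S[OF t] unfolding ES_def by auto
qed



definition r3 :: real where "r3 = sqrt 3"
definition s2 :: real where "s2 = sqrt 2"
definition al :: real where "al = (r3 - 1)/2"
definition be :: real where "be = r3 - 1"
definition cc :: real where "cc = s2 - 1"

lemma r3sq: "r3 * r3 = 3" unfolding r3_def by simp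
lemma s2sq: "s2 * s2 = 2" unfolding s2_def by simp
lemma r3_bounds: "1.73205 < r3" "r3 < 1.73206"
  unfolding r3_def
  by (rule real_less_rsqrt, simp add: power2_eq_square) (rule real_less_lsqrt, simp_all add: power2_eq_square)
lemma s2_bounds: "1.41421 < s2" "s2 < 1.41422"
  unfolding s2_def
  by (rule real_less_rsqrt, simp add: power2_eq_square) (rule real_less_lsqrt, simp_all add: power2_eq_square)
lemma inv_from: "(y::real) \<noteq> 0 \<Longrightarrow> x * y = 1 \<Longrightarrow> 1/y = x"
  by (simp add: divide_eq_eq)
lemma r3_irr: "r3 \<notin> \<rat>"
  using sqrt_prime_irr[of 3] unfolding r3_def by simp
lemma s2_irr: "s2 \<notin> \<rat>"
  using sqrt_prime_irr[of 2] unfolding s2_def by simp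

lemma al_b: "0.366 < al" "al < 0.3661" unfolding al_def using r3_bounds by auto
lemma be_b: "0.732 < be" "be < 0.7321" unfolding be_def using r3_bounds by auto
lemma cc_b: "0.41421 < cc" "cc < 0.41422" unfolding cc_def using s2_bounds by auto

lemma cc_ES: "cc \<in> ES"
proof (rule ES_coind[of "{cc}"])
  fix t assume "t \<in> {cc}" then have t: "t = cc" by simp
  have irr: "cc \<notin> \<rat>"
  proof
    assume "cc \<in> \<rat>" then have "cc + 1 \<in> \<rat>" by simp
    then show False using s2_irr unfolding cc_def by simp
  qed
  have inv: "1/cc = s2 + 1" unfolding cc_def
    by (rule inv_from) (use s2sq s2_bounds in \<open>auto simp: algebra_simps\<close>)
  have fl: "\<lfloor>1/cc\<rfloor> = 2" unfolding inv using s2_bounds by (intro floor_unique) auto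
  have "gauss cc = (s2+1) - 2" unfolding gauss_def fl by (simp add: inv)
  then have g: "gauss cc = cc" by (simp add: cc_def)
  show "t \<notin> \<rat> \<and> 0 < t \<and> t < 1 \<and> \<lfloor>1/t\<rfloor> \<le> 2 \<and> gauss t \<in> {cc}"
    using irr fl g s2_bounds unfolding t by (auto simp: cc_def)
qed simp

lemma al_be_ES: "al \<in> ES" "be \<in> ES"
proof -
  have irra: "al \<notin> \<rat>"
  proof
    assume "al \<in> \<rat>" then have "2*al + 1 \<in> \<rat>" by simp
    moreover have "2*al + 1 = r3" unfolding al_def by (simp add: field_simps)
    ultimately show False using r3_irr by simp
  qed
  have irrb: "be \<notin> \<rat>"
  proof
    assume "be \<in> \<rat>" then have "be + 1 \<in> \<rat>" by simp
    then show False using r3_irr unfolding be_def by simp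
  qed
  have inva: "1/al = r3 + 1" unfolding al_def
    by (rule inv_from) (use r3sq r3_bounds in \<open>auto simp: algebra_simps\<close>)
  have invb: "1/be = (r3 + 1)/2" unfolding be_def
    by (rule inv_from) (use r3sq r3_bounds in \<open>auto simp: algebra_simps\<close>)
  have fla: "\<lfloor>1/al\<rfloor> = 2" unfolding inva using r3_bounds by (intro floor_unique) auto
  have flb: "\<lfloor>1/be\<rfloor> = 1" unfolding invb using r3_bounds by (intro floor_unique) auto
  have ga: "gauss al = be" unfolding gauss_def fla by (simp add: inva be_def)
  have gb: "gauss be = al" unfolding gauss_def flb by (simp add: invb al_def field_simps)
  have S: "t \<notin> \<rat> \<and> 0 < t \<and> t < 1 \<and> \<lfloor>1/t\<rfloor> \<le> 2 \<and> gauss t \<in> {al, be}" if tt: "t \<in> {al, be}" for t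
  proof -
    have "t = al \<or> t = be" using tt by simp
    moreover have "1/al < 3" "1/be < 3" unfolding inva invb using r3_bounds by auto
    ultimately show ?thesis using irra irrb fla flb ga gb al_b be_b by auto
  qed
  show "al \<in> ES" by (rule ES_coind[of "{al,be}"]) (use S in auto)
  show "be \<in> ES" by (rule ES_coind[of "{al,be}"]) (use S in auto)
qed

lemma ES_bounds: assumes "t \<in> ES" shows "al \<le> t \<and> t \<le> be"
proof -
  define m where "m = Inf ES"
  define M where "M = Sup ES"
  have ne: "ES \<noteq> {}" using cc_ES by auto
  have pos: "\<And>t. t \<in> ES \<Longrightarrow> 0 < t \<and> t < 1" unfolding ES_def by auto
  have bb: "bdd_below ES" by (meson bdd_below_def less_le_not_le pos)
  have ba: "bdd_above ES" by (meson bdd_above_def less_le_not_le pos)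
  have mle: "m \<le> t" if "t \<in> ES" for t unfolding m_def by (rule cInf_lower[OF that bb])
  have leM: "t \<le> M" if "t \<in> ES" for t unfolding M_def by (rule cSup_upper[OF that ba])
  have m0: "0 \<le> m" unfolding m_def by (rule cInf_greatest[OF ne]) (use pos in force)
  have M0: "m \<le> M" using mle leM cc_ES by fastforce
  have low: "1/(2+M) \<le> t" if tt: "t \<in> ES" for t
  proof -
    obtain a g where ag: "a = 1 \<or> a = 2" "g \<in> ES" "t = 1/(a+g)" using ES_decomp[OF tt] by blast
    have "g \<le> M" using leM ag by simp
    moreover have "0 < g" using pos ag by simp
    ultimately show ?thesis using ag by (auto simp: field_simps)
  qed
  have up: "t \<le> 1/(1+m)" if tt: "t \<in> ES" for t
  proof -
    obtain a g where ag: "a = 1 \<or> a = 2" "g \<in> ES" "t = 1/(a+g)" using ES_decomp[OF tt] by blast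
    have "m \<le> g" using mle ag by simp
    then show ?thesis using ag m0 by (auto simp: field_simps)
  qed
  have m1: "1/(2+M) \<le> m" unfolding m_def by (rule cInf_greatest[OF ne]) (use low in auto)
  have M1: "M \<le> 1/(1+m)" unfolding M_def by (rule cSup_least[OF ne]) (use up in auto)
  have "1/(2+1/(1+m)) \<le> 1/(2+M)" using M1 m0 M0 by (simp add: frac_le)
  with m1 have "1/(2+1/(1+m)) \<le> m" by linarith
  then have "(1+m) \<le> m*(3+2*m)" using m0 by (simp add: field_simps)
  then have q: "0 \<le> 2*m*m + 2*m - 1" by (simp add: algebra_simps)
  have "2*al*al + 2*al - 1 = (r3*r3 - 3)/2" unfolding al_def by (simp add: field_simps)
  then have alq: "2*al*al + 2*al - 1 = 0" using r3sq by simp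
  have mal: "al \<le> m"
  proof (rule ccontr)
    assume "\<not> al \<le> m" then have "m < al" by simp
    then have "m*m \<le> al*al" using m0 by (simp add: mult_mono)
    with \<open>m < al\<close> have "2*m*m + 2*m - 1 < 2*al*al + 2*al - 1" by linarith
    with q alq show False by linarith
  qed
  have "1/(1+m) \<le> 1/(1+al)" by (rule frac_le) (use mal al_b in auto)
  also have "1/(1+al) = be" unfolding al_def be_def using r3sq r3_bounds by (simp add: field_simps)
  finally have "M \<le> be" using M1 by linarith
  then show ?thesis using mle leM assms mal by force
qed



definition kap :: real where "kap = 2* s2 - 3"
definition phi :: "real \<Rightarrow> real" where "phi t = (t - cc)/(t + s2 + 1)"
definition hh :: "real \<Rightarrow> real \<Rightarrow> real" where
  "hh e p = p / ((s2+2)*((s2+2) + (s2-2)*e*p))"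
definition kk :: "real \<Rightarrow> real \<Rightarrow> real" where
  "kk e p = p / ((s2+1)*((s2+1) + (s2-1)*e*p))"

lemma s2sq': "s2 * (s2 * x) = 2 * x" using s2sq by (metis mult.assoc)

lemma gen1: "(q::real) \<noteq> 0 \<Longrightarrow> (a/q)/(b*(x/q)) = a/(b*x)" by (simp add: field_simps)
lemma gen2: "(A::real) \<noteq> 0 \<Longrightarrow> S \<noteq> 0 \<Longrightarrow> T \<noteq> 0 \<Longrightarrow> 1/T = 1/A - 2*S*((T-A)/(A*(2*S*T)))"
  by (simp add: field_simps)

lemma gen3: "(q::real) \<noteq> 0 \<Longrightarrow> (1/q - a)/(1/q + b) = (1 - a*q)/(1 + b*q)"
proof -
  assume q: "q \<noteq> 0"
  have "(1/q - a) = (1 - a*q)/q" "(1/q + b) = (1 + b*q)/q" using q by (simp_all add: field_simps)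
  then show ?thesis using q by simp
qed

lemma frac_eqI: "(b::real) \<noteq> 0 \<Longrightarrow> d \<noteq> 0 \<Longrightarrow> a*d = c*b \<Longrightarrow> a/b = c/d"
  by (simp add: divide_eq_eq eq_divide_eq field_simps)

lemma phi_T2:
  assumes t: "0 \<le> t" shows "phi (1/(2+t)) = kap * phi t"
proof -
  have "0 \<le> (s2+1)*t" using t s2_bounds by simp
  then have pp: "2 * s2 + 3 + (s2+1)*t > 0" using s2_bounds by linarith
  have n1: "2 + t \<noteq> 0" "t + s2 + 1 \<noteq> 0" "2* s2 + 3 + (s2+1)*t \<noteq> 0"
    using t s2_bounds pp by linarith+
  have "phi (1/(2+t)) = (1 - cc*(2+t))/(1 + (s2+1)*(2+t))"
    unfolding phi_def using gen3[of "2+t" cc "s2+1"] n1 by (simp add: add.assoc)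
  also have "\<dots> = (3 - 2* s2 - (s2-1)*t)/(2* s2 + 3 + (s2+1)*t)"
    unfolding cc_def by (simp add: algebra_simps)
  also have "\<dots> = (kap * (t - cc))/(t + s2 + 1)"
    apply (rule frac_eqI) using n1 apply simp_all
    unfolding kap_def cc_def by (simp add: algebra_simps s2sq s2sq')
  finally show ?thesis unfolding phi_def by simp
qed

lemma hh_scale: "hh e (kap*p) = kap * hh (kap*e) p"
  unfolding hh_def by (simp add: mult_ac)
lemma kk_scale: "kk e (kap*p) = kap * kk (kap*e) p"
  unfolding kk_def by (simp add: mult_ac)

lemma F3: assumes t: "0 \<le> t" shows "1/(3+t) = 1/(s2+2) - 2 * s2 * hh 1 (phi t)"
proof -
  have n1: "3 + t \<noteq> 0" "t + s2 + 1 \<noteq> 0" "s2 + 2 \<noteq> 0" "s2 \<noteq> 0" using t s2_bounds by auto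
  have "(s2+2) + (s2-2)*phi t = ((s2+2)*(t+s2+1) + (s2-2)*(t-cc))/(t+s2+1)"
    unfolding phi_def using n1 by (simp add: field_simps)
  also have "(s2+2)*(t+s2+1) + (s2-2)*(t-cc) = 2 * s2 * (t+3)"
    unfolding cc_def by (simp add: algebra_simps s2sq s2sq')
  finally have d: "(s2+2) + (s2-2)*phi t = 2 * s2 * (t+3)/(t+s2+1)" .
  have "hh 1 (phi t) = ((t-cc)/(t+s2+1)) / ((s2+2) * (2 * s2 * (t+3)/(t+s2+1)))"
    by (simp only: hh_def mult_1_right d) (simp only: phi_def)
  also have "\<dots> = (t-cc) / ((s2+2) * (2 * s2 * (t+3)))" by (rule gen1) (use n1 in simp)
  also have "t - cc = (3+t) - (s2+2)" unfolding cc_def by simp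
  finally have "hh 1 (phi t) = ((3+t) - (s2+2)) / ((s2+2) * (2 * s2 * (t+3)))" .
  moreover have "3 + t = (t+3)" by simp
  ultimately show ?thesis using gen2[of "(s2+2)" s2 "3+t"] n1 by (simp add: mult.assoc)
qed

lemma F2: assumes t: "0 \<le> t" shows "1/(2+t) = 1/(s2+1) - 2 * s2 * kk 1 (phi t)"
proof -
  have n1: "2 + t \<noteq> 0" "t + s2 + 1 \<noteq> 0" "s2 + 1 \<noteq> 0" "s2 \<noteq> 0" using t s2_bounds by auto
  have "(s2+1) + (s2-1)*phi t = ((s2+1)*(t+s2+1) + (s2-1)*(t-cc))/(t+s2+1)"
    unfolding phi_def using n1 by (simp add: field_simps)
  also have "(s2+1)*(t+s2+1) + (s2-1)*(t-cc) = 2 * s2 * (t+2)"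
    unfolding cc_def by (simp add: algebra_simps s2sq s2sq')
  finally have d: "(s2+1) + (s2-1)*phi t = 2 * s2 * (t+2)/(t+s2+1)" .
  have "kk 1 (phi t) = ((t-cc)/(t+s2+1)) / ((s2+1) * (2 * s2 * (t+2)/(t+s2+1)))"
    by (simp only: kk_def mult_1_right d) (simp only: phi_def)
  also have "\<dots> = (t-cc) / ((s2+1) * (2 * s2 * (t+2)))" by (rule gen1) (use n1 in simp)
  also have "t - cc = (2+t) - (s2+1)" unfolding cc_def by simp
  finally have "kk 1 (phi t) = ((2+t) - (s2+1)) / ((s2+1) * (2 * s2 * (t+2)))" .
  moreover have "2 + t = (t+2)" by simp
  ultimately show ?thesis using gen2[of "(s2+1)" s2 "2+t"] n1 by (simp add: mult.assoc)
qed

lemma Fsum: "2/(s2+2) + 1/(s2+1) = 1"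
proof -
  have n1: "s2 + 2 \<noteq> 0" "s2 + 1 \<noteq> 0" using s2_bounds by auto
  have "2*(s2+1) + (s2+2) = (s2+2)*(s2+1)" by (simp add: algebra_simps s2sq s2sq')
  then show ?thesis using n1 s2_bounds by (simp add: field_simps)
qed



lemma abs_prod_le: "\<bar>x\<bar> \<le> a \<Longrightarrow> \<bar>y\<bar> \<le> b \<Longrightarrow> \<bar>x*y\<bar> \<le> a*(b::real)"
  by (simp add: abs_mult mult_mono')

lemma kap_b: "-0.17158 < kap" "kap < -0.17156" unfolding kap_def using s2_bounds by auto

lemma I_abs: assumes "kap \<le> e" "e \<le> kap*kap" shows "\<bar>e\<bar> \<le> 0.17158"
proof -
  have "\<bar>kap*kap\<bar> \<le> 0.17158*0.17158" using kap_b by (intro abs_prod_le) auto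
  then show ?thesis using assms kap_b by auto
qed

lemma den_b:
  fixes A B e p :: real
  assumes "\<bar>B\<bar> \<le> bB" "\<bar>e\<bar> \<le> eb" "\<bar>p\<bar> \<le> pb"
  shows "A - bB*eb*pb \<le> A + B*e*p" "A + B*e*p \<le> A + bB*eb*pb"
proof -
  have "\<bar>B*e\<bar> \<le> bB*eb" using assms by (intro abs_prod_le)
  then have "\<bar>B*e*p\<bar> \<le> bB*eb*pb" using assms by (intro abs_prod_le)
  then show "A - bB*eb*pb \<le> A + B*e*p" "A + B*e*p \<le> A + bB*eb*pb" by auto
qed

lemma low_pos:
  fixes A X Au Xu p :: real
  assumes "0 < A" "0 < X" "A \<le> Au" "X \<le> Xu" "0 \<le> p"
  shows "p/(Au*Xu) \<le> p/(A*X)"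
proof -
  have "A*X \<le> Au*Xu" using assms by (intro mult_mono) auto
  moreover have "0 < (Au*Xu)*(A*X)" using assms by simp
  ultimately show ?thesis using assms by (intro divide_left_mono) auto
qed

lemma low_neg:
  fixes A X Al Xl p :: real
  assumes "0 < Al" "0 < Xl" "Al \<le> A" "Xl \<le> X" "p \<le> 0"
  shows "p/(Al*Xl) \<le> p/(A*X)"
proof -
  have "Al*Xl \<le> A*X" using assms by (intro mult_mono) auto
  moreover have "0 < (A*X)*(Al*Xl)" using assms by simp
  ultimately have "(-p)/(A*X) \<le> (-p)/(Al*Xl)" using assms by (intro divide_left_mono) auto
  then show ?thesis by simp
qed

lemma num1:
  assumes e: "\<bar>e\<bar> \<le> 0.17158"
  shows "hh e 0.0544 + hh e (-0.01735) + kk e (-0.01735) > 0"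
    and "2 * hh e (-0.01735) + kk e 0.0544 > 0"
proof -
  have B2: "\<bar>s2 - 2\<bar> \<le> 0.58579" and B1: "\<bar>s2 - 1\<bar> \<le> 0.41422" using s2_bounds by auto
  have p1: "\<bar>0.0544::real\<bar> \<le> 0.0544" and p2: "\<bar>-0.01735::real\<bar> \<le> 0.01735" by auto
  have c1: "0.58579*0.17158*0.0544 \<le> (0.00547::real)" by simp
  have c2: "0.58579*0.17158*0.01735 \<le> (0.001745::real)" by simp
  have c3: "0.41422*0.17158*0.01735 \<le> (0.001234::real)" by simp
  have c4: "0.41422*0.17158*0.0544 \<le> (0.003867::real)" by simp
  note d1 = den_b[OF B2 e p1, of "s2+2"]
  note d2 = den_b[OF B2 e p2, of "s2+2"]
  note d3 = den_b[OF B1 e p2, of "s2+1"]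
  note d4 = den_b[OF B1 e p1, of "s2+1"]
  define X1 where "X1 = s2 + 2 + (s2 - 2) * e * 0.0544"
  define X2 where "X2 = s2 + 2 + (s2 - 2) * e * (-0.01735)"
  define X3 where "X3 = s2 + 1 + (s2 - 1) * e * (-0.01735)"
  define X4 where "X4 = s2 + 1 + (s2 - 1) * e * 0.0544"
  have X1: "X1 \<le> s2 + 2 + 0.00547" using d1 c1 unfolding X1_def by linarith
  have X1': "s2 + 2 - 0.00547 \<le> X1" using d1 c1 unfolding X1_def by linarith
  have X2: "s2 + 2 - 0.001745 \<le> X2" using d2 c2 unfolding X2_def by linarith
  have X3: "s2 + 1 - 0.001234 \<le> X3" using d3 c3 unfolding X3_def by linarith
  have X4: "X4 \<le> s2 + 1 + 0.003867" using d4 c4 unfolding X4_def by linarith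
  have X4': "s2 + 1 - 0.003867 \<le> X4" using d4 c4 unfolding X4_def by linarith
  have "0.0544/(3.41422*(3.41422 + 0.00547)) \<le> 0.0544/((s2+2)*X1)"
    by (rule low_pos) (use X1 X1' s2_bounds in auto)
  then have a: "0.0544/(3.41422*(3.41422 + 0.00547)) \<le> hh e 0.0544"
    unfolding hh_def X1_def by simp
  have "(-0.01735)/(3.41421*(3.41421 - 0.001745)) \<le> (-0.01735)/((s2+2)*X2)"
    by (rule low_neg) (use X2 s2_bounds in auto)
  then have b: "(-0.01735)/(3.41421*(3.41421 - 0.001745)) \<le> hh e (-0.01735)"
    unfolding hh_def X2_def by simp
  have "(-0.01735)/(2.41421*(2.41421 - 0.001234)) \<le> (-0.01735)/((s2+1)*X3)"
    by (rule low_neg) (use X3 s2_bounds in auto)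
  then have c: "(-0.01735)/(2.41421*(2.41421 - 0.001234)) \<le> kk e (-0.01735)"
    unfolding kk_def X3_def by simp
  have "0.0544/(2.41422*(2.41422 + 0.003867)) \<le> 0.0544/((s2+1)*X4)"
    by (rule low_pos) (use X4 X4' s2_bounds in auto)
  then have d: "0.0544/(2.41422*(2.41422 + 0.003867)) \<le> kk e 0.0544"
    unfolding kk_def X4_def by simp
  show "hh e 0.0544 + hh e (-0.01735) + kk e (-0.01735) > 0" using a b c by simp
  show "2 * hh e (-0.01735) + kk e 0.0544 > 0" using b d by simp
qed



lemma phi_form: assumes "0 \<le> t" shows "phi t = 1 - 2 * s2/(t + s2 + 1)"
proof -
  have "t + s2 + 1 \<noteq> 0" using assms s2_bounds by linarith
  then show ?thesis unfolding phi_def cc_def by (simp add: field_simps)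
qed

lemma phi_mono: assumes "0 \<le> t" "t \<le> t'" shows "phi t \<le> phi t'"
proof -
  have "2 * s2/(t' + s2 + 1) \<le> 2 * s2/(t + s2 + 1)"
    using assms s2_bounds by (intro divide_left_mono) (auto intro!: mult_pos_pos)
  then show ?thesis using assms by (simp add: phi_form)
qed

lemma phi_abs: assumes "0 \<le> t" shows "\<bar>phi t\<bar> \<le> 1"
proof -
  have p: "0 < t + s2 + 1" using assms s2_bounds by linarith
  have "0 \<le> 2 * s2/(t + s2 + 1)" using p s2_bounds by simp
  moreover have "2 * s2/(t + s2 + 1) \<le> 2" using p assms by (simp add: divide_le_eq)
  ultimately show ?thesis using assms by (simp add: phi_form)
qed

lemma phi_v1: "0.0544 \<le> phi 0.577"
proof -
  have p: "0 < 0.577 + s2 + 1" using s2_bounds by auto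
  have "2 * s2/(0.577 + s2 + 1) \<le> 0.9456" using p s2_bounds by (simp add: divide_le_eq)
  then show ?thesis by (simp add: phi_form)
qed

lemma phi_v2: "-0.01735 \<le> phi 0.366"
proof -
  have p: "0 < 0.366 + s2 + 1" using s2_bounds by auto
  have "2 * s2/(0.366 + s2 + 1) \<le> 1.01735" using p s2_bounds by (simp add: divide_le_eq)
  then show ?thesis by (simp add: phi_form)
qed

lemma gmono:
  fixes A B e p q :: real
  assumes "0 < A" "0 < A + B*e*p" "0 < A + B*e*q" "p \<le> q"
  shows "p/(A*(A+B*e*p)) \<le> q/(A*(A+B*e*q))"
proof -
  have "p*(A*(A+B*e*q)) \<le> q*(A*(A+B*e*p))"
  proof -
    have eq: "q*(A*(A+B*e*p)) - p*(A*(A+B*e*q)) = (A*A)*(q-p)" by (simp add: algebra_simps)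
    have "0 \<le> (A*A)*(q-p)" using assms by simp
    then show ?thesis using eq by simp
  qed
  then show ?thesis using assms by (simp add: divide_simps)
qed

lemma hh_mono: assumes "\<bar>e\<bar> \<le> 1" "\<bar>p\<bar> \<le> 1" "\<bar>q\<bar> \<le> 1" "p \<le> q" shows "hh e p \<le> hh e q"
proof -
  have B2: "\<bar>s2 - 2\<bar> \<le> 0.58579" using s2_bounds by auto
  note d1 = den_b[OF B2 assms(1) assms(2), of "s2+2"]
  note d2 = den_b[OF B2 assms(1) assms(3), of "s2+2"]
  show ?thesis unfolding hh_def
    by (rule gmono) (use d1 d2 s2_bounds assms in auto)
qed

lemma kk_mono: assumes "\<bar>e\<bar> \<le> 1" "\<bar>p\<bar> \<le> 1" "\<bar>q\<bar> \<le> 1" "p \<le> q" shows "kk e p \<le> kk e q"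
proof -
  have B1: "\<bar>s2 - 1\<bar> \<le> 0.41422" using s2_bounds by auto
  note d1 = den_b[OF B1 assms(1) assms(2), of "s2+1"]
  note d2 = den_b[OF B1 assms(1) assms(3), of "s2+1"]
  show ?thesis unfolding kk_def
    by (rule gmono) (use d1 d2 s2_bounds assms in auto)
qed

definition RR :: "real \<Rightarrow> real \<Rightarrow> real \<Rightarrow> real \<Rightarrow> bool" where
  "RR e a b d \<longleftrightarrow> hh e (phi a) + hh e (phi b) + kk e (phi d) = 0"

lemma ES_b: assumes "t \<in> ES" shows "0.366 < t" "t < 0.7321"
  using ES_bounds[OF assms] al_b be_b by auto

lemma T1_big: assumes "g \<in> ES" shows "0.577 \<le> 1/(1+g)"
proof -
  have "g < 0.7321" using ES_b[OF assms] by simp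
  moreover have "0 < g" using ES_b[OF assms] by simp
  ultimately show ?thesis by (simp add: le_divide_eq)
qed

lemma first_digit2:
  assumes "t \<in> ES" "t < 0.577"
  shows "\<exists>g\<in>ES. t = 1/(2+g)"
proof -
  obtain x g where xg: "x = 1 \<or> x = 2" "g \<in> ES" "t = 1/(x+g)" using ES_decomp[OF assms(1)] by blast
  have "x \<noteq> 1" using T1_big[OF xg(2)] xg assms by auto
  then show ?thesis using xg by auto
qed

lemma phi_big: assumes "t \<in> ES" "0.577 \<le> t" shows "0.0544 \<le> phi t"
  using phi_mono[OF _ assms(2)] phi_v1 by auto
lemma phi_low: assumes "t \<in> ES" shows "-0.01735 \<le> phi t"
  using phi_mono[of "0.366" t] phi_v2 ES_b[OF assms] by auto
lemma phi_abs_ES: assumes "t \<in> ES" shows "\<bar>phi t\<bar> \<le> 1"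
  using phi_abs ES_b[OF assms] by auto

lemma stepI:
  assumes a: "a \<in> ES" and b: "b \<in> ES" and d: "d \<in> ES" and e: "\<bar>e\<bar> \<le> 0.17158"
    and R: "RR e a b d"
  shows "\<exists>a1\<in>ES. \<exists>b1\<in>ES. \<exists>d1\<in>ES. a = 1/(2+a1) \<and> b = 1/(2+b1) \<and> d = 1/(2+d1)
            \<and> RR (kap*e) a1 b1 d1"
proof -
  have e1: "\<bar>e\<bar> \<le> 1" using e by simp
  have c1: "\<bar>(0.0544::real)\<bar> \<le> 1" "\<bar>(-0.01735::real)\<bar> \<le> 1" by auto
  have lb: "hh e (-0.01735) \<le> hh e (phi b)" "hh e (-0.01735) \<le> hh e (phi a)"
      "kk e (-0.01735) \<le> kk e (phi d)"
    using hh_mono[OF e1 c1(2) phi_abs_ES phi_low, OF b b] hh_mono[OF e1 c1(2) phi_abs_ES phi_low, OF a a]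
      kk_mono[OF e1 c1(2) phi_abs_ES phi_low, OF d d] by auto
  have Rs: "hh e (phi a) + hh e (phi b) + kk e (phi d) = 0" using R unfolding RR_def .
  have "a < 0.577"
  proof (rule ccontr)
    assume "\<not> a < 0.577"
    then have "hh e 0.0544 \<le> hh e (phi a)"
      using hh_mono[OF e1 c1(1) phi_abs_ES phi_big, OF a a] by auto
    then show False using num1(1)[OF e] lb Rs by linarith
  qed
  then obtain a1 where a1: "a1 \<in> ES" "a = 1/(2+a1)" using first_digit2[OF a] by blast
  have "b < 0.577"
  proof (rule ccontr)
    assume "\<not> b < 0.577"
    then have "hh e 0.0544 \<le> hh e (phi b)"
      using hh_mono[OF e1 c1(1) phi_abs_ES phi_big, OF b b] by auto
    then show False using num1(1)[OF e] lb Rs by linarith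
  qed
  then obtain b1 where b1: "b1 \<in> ES" "b = 1/(2+b1)" using first_digit2[OF b] by blast
  have "d < 0.577"
  proof (rule ccontr)
    assume "\<not> d < 0.577"
    then have "kk e 0.0544 \<le> kk e (phi d)"
      using kk_mono[OF e1 c1(1) phi_abs_ES phi_big, OF d d] by auto
    then show False using num1(2)[OF e] lb Rs by linarith
  qed
  then obtain d1 where d1: "d1 \<in> ES" "d = 1/(2+d1)" using first_digit2[OF d] by blast
  have pa: "phi a = kap * phi a1" using a1 phi_T2 ES_b[OF a1(1)] by auto
  have pb: "phi b = kap * phi b1" using b1 phi_T2 ES_b[OF b1(1)] by auto
  have pd: "phi d = kap * phi d1" using d1 phi_T2 ES_b[OF d1(1)] by auto
  have "kap * (hh (kap*e) (phi a1) + hh (kap*e) (phi b1) + kk (kap*e) (phi d1)) = 0"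
    using Rs unfolding pa pb pd hh_scale kk_scale by (simp add: algebra_simps)
  moreover have "kap \<noteq> 0" using kap_b by auto
  ultimately have "RR (kap*e) a1 b1 d1" unfolding RR_def by simp
  then show ?thesis using a1 b1 d1 by blast
qed

lemma cc_fix: "1/(2+cc) = cc"
proof -
  have "cc*(2+cc) = 1" unfolding cc_def using s2sq by (simp add: algebra_simps)
  then show ?thesis using cc_b by (simp add: divide_eq_eq mult.commute)
qed

lemma contr: assumes "0 \<le> g" shows "\<bar>1/(2+g) - cc\<bar> \<le> \<bar>g - cc\<bar>/4"
proof -
  have p: "0 < 2+g" "0 < 2+cc" using assms cc_b by auto
  have "1/(2+g) - cc = 1/(2+g) - 1/(2+cc)" using cc_fix by simp
  also have "\<dots> = (cc - g)/((2+g)*(2+cc))" using p by (simp add: field_simps)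
  finally have eq: "\<bar>1/(2+g) - cc\<bar> = \<bar>g - cc\<bar>/((2+g)*(2+cc))" using p by (simp add: abs_minus_commute)
  have "2*2 \<le> (2+g)*(2+cc)" using assms cc_b by (intro mult_mono) auto
  then show ?thesis unfolding eq by (intro divide_left_mono) (use p in auto)
qed



lemma inv_anti: "0 < x \<Longrightarrow> x \<le> y \<Longrightarrow> 1/y \<le> 1/(x::real)"
  by (rule frac_le) auto

lemma conv:
  "\<forall>e a b d. \<bar>e\<bar> \<le> 0.17158 \<longrightarrow> a \<in> ES \<longrightarrow> b \<in> ES \<longrightarrow> d \<in> ES \<longrightarrow> RR e a b d \<longrightarrow>
     \<bar>a - cc\<bar> \<le> (1/4)^n \<and> \<bar>b - cc\<bar> \<le> (1/4)^n \<and> \<bar>d - cc\<bar> \<le> (1/4)^n"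
proof (induction n)
  case 0
  show ?case
  proof (intro allI impI)
    fix e a b d assume h: "\<bar>e\<bar> \<le> 0.17158" "a \<in> ES" "b \<in> ES" "d \<in> ES" "RR e a b d"
    show "\<bar>a - cc\<bar> \<le> (1/4)^0 \<and> \<bar>b - cc\<bar> \<le> (1/4)^0 \<and> \<bar>d - cc\<bar> \<le> (1/4)^0"
      using ES_b[OF h(2)] ES_b[OF h(3)] ES_b[OF h(4)] cc_b by auto
  qed
next
  case (Suc n)
  show ?case
  proof (intro allI impI)
    fix e a b d assume h: "\<bar>e\<bar> \<le> 0.17158" "a \<in> ES" "b \<in> ES" "d \<in> ES" "RR e a b d"
    obtain a1 b1 d1 where s: "a1 \<in> ES" "b1 \<in> ES" "d1 \<in> ES" "a = 1/(2+a1)" "b = 1/(2+b1)" "d = 1/(2+d1)"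
      "RR (kap*e) a1 b1 d1"
      using stepI[OF h(2,3,4,1,5)] by blast
    have "\<bar>kap*e\<bar> \<le> 0.17158*0.17158" using h(1) kap_b by (intro abs_prod_le) auto
    then have ke: "\<bar>kap*e\<bar> \<le> 0.17158" by simp
    have IH: "\<bar>a1 - cc\<bar> \<le> (1/4)^n \<and> \<bar>b1 - cc\<bar> \<le> (1/4)^n \<and> \<bar>d1 - cc\<bar> \<le> (1/4)^n"
      using Suc.IH ke s by blast
    have ca: "\<bar>a - cc\<bar> \<le> \<bar>a1 - cc\<bar>/4" using contr[of a1] ES_b[OF s(1)] s(4) by simp
    have cb: "\<bar>b - cc\<bar> \<le> \<bar>b1 - cc\<bar>/4" using contr[of b1] ES_b[OF s(2)] s(5) by simp
    have cd: "\<bar>d - cc\<bar> \<le> \<bar>d1 - cc\<bar>/4" using contr[of d1] ES_b[OF s(3)] s(6) by simp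
    show "\<bar>a - cc\<bar> \<le> (1/4)^Suc n \<and> \<bar>b - cc\<bar> \<le> (1/4)^Suc n \<and> \<bar>d - cc\<bar> \<le> (1/4)^Suc n"
      using ca cb cd IH by auto
  qed
qed

lemma zero_pow: assumes "\<forall>n. \<bar>x::real\<bar> \<le> (1/4)^n" shows "x = 0"
proof (rule ccontr)
  assume "x \<noteq> 0" then have "0 < \<bar>x\<bar>" by simp
  then obtain n where "(1/4::real)^n < \<bar>x\<bar>" using real_arch_pow_inv[of "\<bar>x\<bar>" "1/4"] by auto
  then show False using assms by (meson not_le)
qed

lemma claim:
  assumes a: "a \<in> ES" and b: "b \<in> ES" and d: "d \<in> ES"
    and F: "1/(3+a) + 1/(3+b) + 1/(2+d) = 1"
  shows "a = cc \<and> b = cc \<and> d = cc"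
proof -
  note ba = ES_b[OF a] and bb = ES_b[OF b] and bd = ES_b[OF d]
  have ua: "1/(3+a) \<le> 1/3.366" and ub: "1/(3+b) \<le> 1/3.366" and ud: "1/(2+d) \<le> 1/2.366"
    using ba bb bd by (intro inv_anti; simp)+
  have "a < 0.577"
  proof (rule ccontr)
    assume "\<not> a < 0.577"
    then have "1/(3+a) \<le> 1/3.577" by (intro inv_anti) auto
    then show False using ub ud F by simp
  qed
  then obtain a1 where a1: "a1 \<in> ES" "a = 1/(2+a1)" using first_digit2[OF a] by blast
  have "b < 0.577"
  proof (rule ccontr)
    assume "\<not> b < 0.577"
    then have "1/(3+b) \<le> 1/3.577" by (intro inv_anti) auto
    then show False using ua ud F by simp
  qed
  then obtain b1 where b1: "b1 \<in> ES" "b = 1/(2+b1)" using first_digit2[OF b] by blast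
  have "d < 0.577"
  proof (rule ccontr)
    assume "\<not> d < 0.577"
    then have "1/(2+d) \<le> 1/2.577" by (intro inv_anti) auto
    then show False using ua ub F by simp
  qed
  then obtain d1 where d1: "d1 \<in> ES" "d = 1/(2+d1)" using first_digit2[OF d] by blast
  have "1 = (2/(s2+2) + 1/(s2+1)) - 2 * s2 * (hh 1 (phi a) + hh 1 (phi b) + kk 1 (phi d))"
    using F F3[of a] F3[of b] F2[of d] ba bb bd by (simp add: algebra_simps)
  then have "2 * s2 * (hh 1 (phi a) + hh 1 (phi b) + kk 1 (phi d)) = 0" using Fsum by simp
  then have Rs: "hh 1 (phi a) + hh 1 (phi b) + kk 1 (phi d) = 0" using s2_bounds by simp
  have pa: "phi a = kap * phi a1" using a1 phi_T2 ES_b[OF a1(1)] by auto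
  have pb: "phi b = kap * phi b1" using b1 phi_T2 ES_b[OF b1(1)] by auto
  have pd: "phi d = kap * phi d1" using d1 phi_T2 ES_b[OF d1(1)] by auto
  have "kap * (hh (kap*1) (phi a1) + hh (kap*1) (phi b1) + kk (kap*1) (phi d1)) = 0"
    using Rs unfolding pa pb pd hh_scale kk_scale by (simp add: algebra_simps)
  moreover have "kap \<noteq> 0" using kap_b by auto
  ultimately have R: "RR kap a1 b1 d1" unfolding RR_def by simp
  have ke: "\<bar>kap\<bar> \<le> 0.17158" using kap_b by auto
  have "\<forall>n. \<bar>a1 - cc\<bar> \<le> (1/4)^n \<and> \<bar>b1 - cc\<bar> \<le> (1/4)^n \<and> \<bar>d1 - cc\<bar> \<le> (1/4)^n"
    using conv ke a1 b1 d1 R by blast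
  then have "\<forall>n. \<bar>a1 - cc\<bar> \<le> (1/4)^n" "\<forall>n. \<bar>b1 - cc\<bar> \<le> (1/4)^n" "\<forall>n. \<bar>d1 - cc\<bar> \<le> (1/4)^n"
    by auto
  then have "a1 - cc = 0" "b1 - cc = 0" "d1 - cc = 0" using zero_pow by blast+
  then show ?thesis using a1 b1 d1 cc_fix by auto
qed



lemma vals:
  "1/(3+be) = 2 - sqrt 3" "al = (sqrt 3 - 1)/2" "be = sqrt 3 - 1"
  "1/(1+1/(1+be)) = (3 - sqrt 3)/2"
  "1/(2+be) = al" "1/(1+al) = be"
  "1/(3+cc) = (2 - sqrt 2)/2" "1/(1+1/(1+cc)) = 2 - sqrt 2" "cc = sqrt 2 - 1"
  "1/(1+cc) = sqrt 2 / 2"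
proof -
  note r = r3sq r3_bounds and s = s2sq s2_bounds
  show "al = (sqrt 3 - 1)/2" "be = sqrt 3 - 1" "cc = sqrt 2 - 1"
    unfolding al_def be_def cc_def r3_def s2_def by auto
  show "1/(3+be) = 2 - sqrt 3" unfolding be_def r3_def[symmetric]
    by (rule inv_from) (use r in \<open>auto simp: algebra_simps\<close>)
  have hb: "1/(1+be) = r3/3" unfolding be_def
    by (rule inv_from) (use r in \<open>auto simp: field_simps\<close>)
  have "(3 - r3)/2 * (1 + r3/3) = 1" using r by (simp add: field_simps algebra_simps)
  then show "1/(1+1/(1+be)) = (3 - sqrt 3)/2" unfolding hb r3_def[symmetric]
    by (intro inv_from) (use r in auto)
  show "1/(2+be) = al" unfolding be_def al_def
    by (rule inv_from) (use r in \<open>auto simp: algebra_simps\<close>)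
  show "1/(1+al) = be" unfolding be_def al_def
    by (rule inv_from) (use r in \<open>auto simp: field_simps\<close>)
  show "1/(3+cc) = (2 - sqrt 2)/2" unfolding cc_def s2_def[symmetric]
    by (rule inv_from) (use s in \<open>auto simp: algebra_simps\<close>)
  have h: "1/(1+cc) = s2/2" unfolding cc_def
    by (rule inv_from) (use s in \<open>auto simp: algebra_simps\<close>)
  then show "1/(1+cc) = sqrt 2 / 2" unfolding s2_def by simp
  show "1/(1+1/(1+cc)) = 2 - sqrt 2" unfolding h s2_def[symmetric]
    by (rule inv_from) (use s in \<open>auto simp: field_simps\<close>)
qed



lemma piece:
  assumes "g \<in> ES"
  shows "0.5773 < 1/(1+g)" "1/(1+g) < 0.7321" "0.366 < 1/(2+g)" "1/(2+g) < 0.4227"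
    "0.2679 < 1/(3+g)" "1/(3+g) < 0.2971"
  using ES_b[OF assms] by (simp_all add: less_divide_eq divide_less_eq)

lemma B_dec:
  assumes "x \<in> bounded_cf 2 1"
  obtains p u where "p = 1 \<or> p = 2 \<or> p = (3::real)" "u \<in> ES" "x = 1/(p+u)"
  using B_decomp[OF assms] by blast

lemma id1: "0 \<le> t \<Longrightarrow> 1/(1+1/(2+t)) = 1 - 1/(3+(t::real))"
  by (simp add: field_simps)
lemma id2: "0 \<le> t \<Longrightarrow> 1/(1+1/(1+t)) = 1 - 1/(2+(t::real))"
  by (simp add: field_simps)

lemma be2al: "be = 2*al" unfolding al_def be_def by simp

lemma main_sub:
  assumes xB: "x \<in> bounded_cf 2 1" and yB: "y \<in> bounded_cf 2 1" and zB: "z \<in> bounded_cf 2 1"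
    and le: "x \<le> y" and sum: "x + y = z"
  shows "(x, y, z) = (2 - sqrt 3, (sqrt 3 - 1) / 2, (3 - sqrt 3) / 2) \<or>
         (x, y, z) = ((sqrt 3 - 1) / 2, (sqrt 3 - 1) / 2, sqrt 3 - 1) \<or>
         (x, y, z) = ((2 - sqrt 2) / 2, (2 - sqrt 2) / 2, 2 - sqrt 2) \<or>
         (x, y, z) = ((2 - sqrt 2) / 2, sqrt 2 - 1, sqrt 2 / 2)"
proof -
  obtain p u where pu: "p = 1 \<or> p = 2 \<or> p = (3::real)" "u \<in> ES" "x = 1/(p+u)" using B_dec[OF xB] by blast
  obtain q v where qv: "q = 1 \<or> q = 2 \<or> q = (3::real)" "v \<in> ES" "y = 1/(q+v)" using B_dec[OF yB] by blast
  obtain r w where rw: "r = 1 \<or> r = 2 \<or> r = (3::real)" "w \<in> ES" "z = 1/(r+w)" using B_dec[OF zB] by blast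
  note Pu = piece[OF pu(2)] and Pv = piece[OF qv(2)] and Pw = piece[OF rw(2)]
  have xb: "0.2679 < x" "x < 0.7321" using pu Pu by auto
  have yb: "0.2679 < y" "y < 0.7321" using qv Pv by auto
  have r1: "r = 1"
  proof (rule ccontr)
    assume "r \<noteq> 1" then have "z < 0.4227" using rw Pw by auto
    then show False using xb yb sum by linarith
  qed
  have p1: "p \<noteq> 1"
  proof
    assume "p = 1" then have "0.5773 < x" using pu Pu by auto
    then show False using yb sum r1 rw Pw by auto
  qed
  have q1: "q \<noteq> 1"
  proof
    assume "q = 1" then have "0.5773 < y" using qv Pv by auto
    then show False using xb sum r1 rw Pw by auto
  qed
  have p23: "\<not> (p = 2 \<and> q = 3)"
  proof
    assume "p = 2 \<and> q = 3" then have "0.366 < x" "y < 0.2971" using pu Pu qv Pv by auto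
    then show False using le by auto
  qed
  have z1: "z = 1/(1+w)" using rw r1 by simp
  note eu = ES_bounds[OF pu(2)] and ev = ES_bounds[OF qv(2)] and ew = ES_bounds[OF rw(2)]
  have cases: "(p = 2 \<and> q = 2) \<or> (p = 3 \<and> q = 2) \<or> (p = 3 \<and> q = 3)" using pu qv p1 q1 p23 by auto
  moreover
  { assume c: "p = 2 \<and> q = 2"
    have "1/(2+be) \<le> x" using c pu eu al_b by (auto intro!: inv_anti)
    moreover have "1/(2+be) \<le> y" using c qv ev al_b by (auto intro!: inv_anti)
    moreover have "z \<le> 1/(1+al)" using z1 ew al_b by (auto intro!: inv_anti)
    ultimately have "x = al" "y = al" "z = be" using vals(5,6) be2al sum by linarith+
    then have ?thesis using vals by auto }
  moreover
  { assume c: "p = 3 \<and> q = 2"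
    obtain t w' where tw: "t = 1 \<or> t = (2::real)" "w' \<in> ES" "w = 1/(t+w')" using ES_decomp[OF rw(2)] by blast
    note ew' = ES_bounds[OF tw(2)] and bw' = ES_b[OF tw(2)]
    { assume t1: "t = 1"
      have "1/(1+be) \<le> 1/(1+w')" using ew' al_b by (auto intro!: inv_anti)
      moreover have "0 < 1/(1+be)" using be_b by simp
      ultimately have p1: "0 < 1 + 1/(1+be)" "1 + 1/(1+be) \<le> 1 + 1/(1+w')" by linarith+
      have "1/(1+1/(1+w')) \<le> 1/(1+1/(1+be))" by (rule inv_anti[OF p1])
      then have zz: "z \<le> (3 - sqrt 3)/2" using z1 tw t1 vals(4) by simp
      have "1/(3+be) \<le> x" using c pu eu al_b by (auto intro!: inv_anti)
      then have xx: "2 - sqrt 3 \<le> x" using vals(1) by simp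
      have "1/(2+be) \<le> y" using c qv ev al_b by (auto intro!: inv_anti)
      then have yy: "(sqrt 3 - 1)/2 \<le> y" using vals(5,2) by simp
      have xx': "2 - r3 \<le> x" and yy': "(r3 - 1)/2 \<le> y" and zz': "z \<le> (3 - r3)/2"
        using xx yy zz unfolding r3_def by auto
      have "x = 2 - r3" "y = (r3 - 1)/2" "z = (3 - r3)/2"
        using xx' yy' zz' sum by argo+
      then have "x = 2 - sqrt 3" "y = (sqrt 3 - 1)/2" "z = (3 - sqrt 3)/2" unfolding r3_def by auto
      then have ?thesis by simp }
    moreover
    { assume t2: "t = 2"
      have zz: "z = 1 - 1/(3+w')" using z1 tw t2 id1[of w'] bw' by simp
      have "1/(3+u) + 1/(3+w') + 1/(2+v) = 1" using sum zz pu qv c by simp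
      then have "u = cc \<and> w' = cc \<and> v = cc" using claim[OF pu(2) tw(2) qv(2)] by simp
      then have "x = 1/(3+cc)" "y = cc" "z = 1/(1+cc)"
        using pu qv c z1 tw t2 cc_fix by auto
      then have ?thesis using vals by simp }
    ultimately have ?thesis using tw by blast }
  moreover
  { assume c: "p = 3 \<and> q = 3"
    obtain t w' where tw: "t = 1 \<or> t = (2::real)" "w' \<in> ES" "w = 1/(t+w')" using ES_decomp[OF rw(2)] by blast
    note ew' = ES_bounds[OF tw(2)] and bw' = ES_b[OF tw(2)] and Pw' = piece[OF tw(2)]
    { assume t2: "t = 2"
      have zz: "z = 1 - 1/(3+w')" using z1 tw t2 id1[of w'] bw' by simp
      have "x < 0.2971" "y < 0.2971" using pu qv c Pu Pv by auto
      then have False using zz sum Pw' by auto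
      then have ?thesis by simp }
    moreover
    { assume t1: "t = 1"
      have zz: "z = 1 - 1/(2+w')" using z1 tw t1 id2[of w'] bw' by simp
      have "1/(3+u) + 1/(3+v) + 1/(2+w') = 1" using sum zz pu qv c by simp
      then have "u = cc \<and> v = cc \<and> w' = cc" using claim[OF pu(2) qv(2) tw(2)] by simp
      then have "x = 1/(3+cc)" "y = 1/(3+cc)" "z = 1/(1+1/(1+cc))"
        using pu qv c z1 tw t1 by auto
      then have ?thesis using vals by simp }
    ultimately have ?thesis using tw by blast }
  ultimately show ?thesis by blast
qed



lemma inB3: "g \<in> ES \<Longrightarrow> 1/(3+g) \<in> bounded_cf 2 1"
  using B_compose[of g 3] by simp
lemma inB1: "g \<in> ES \<Longrightarrow> 1/(1+g) \<in> bounded_cf 2 1"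
  using B_compose[of g 1] by simp
lemma inE1: "g \<in> ES \<Longrightarrow> 1/(1+g) \<in> ES"
  using ES_compose[of g 1] by simp

lemma mem_all:
  "(2 - sqrt 3) \<in> bounded_cf 2 1" "(sqrt 3 - 1)/2 \<in> bounded_cf 2 1" "(3 - sqrt 3)/2 \<in> bounded_cf 2 1"
  "sqrt 3 - 1 \<in> bounded_cf 2 1" "(2 - sqrt 2)/2 \<in> bounded_cf 2 1" "2 - sqrt 2 \<in> bounded_cf 2 1"
  "sqrt 2 - 1 \<in> bounded_cf 2 1" "sqrt 2 / 2 \<in> bounded_cf 2 1"
proof -
  show "(2 - sqrt 3) \<in> bounded_cf 2 1" using inB3[OF al_be_ES(2)] vals(1) by simp
  show "(sqrt 3 - 1)/2 \<in> bounded_cf 2 1" using subsetD[OF ES_sub_B al_be_ES(1)] unfolding vals(2) .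
  show "sqrt 3 - 1 \<in> bounded_cf 2 1" using subsetD[OF ES_sub_B al_be_ES(2)] unfolding vals(3) .
  show "(3 - sqrt 3)/2 \<in> bounded_cf 2 1" using inB1[OF inE1[OF al_be_ES(2)]] vals(4) by simp
  show "(2 - sqrt 2)/2 \<in> bounded_cf 2 1" using inB3[OF cc_ES] vals(7) by simp
  show "2 - sqrt 2 \<in> bounded_cf 2 1" using inB1[OF inE1[OF cc_ES]] vals(8) by simp
  show "sqrt 2 - 1 \<in> bounded_cf 2 1" using subsetD[OF ES_sub_B cc_ES] unfolding vals(9) .
  show "sqrt 2 / 2 \<in> bounded_cf 2 1" using inB1[OF cc_ES] vals(10) by simp
qed

lemma arith_all:
  "2 - sqrt 3 \<le> (sqrt 3 - 1)/2" "(2 - sqrt 3) + (sqrt 3 - 1)/2 = (3 - sqrt 3)/2"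
  "(sqrt 3 - 1)/2 + (sqrt 3 - 1)/2 = sqrt 3 - 1"
  "(2 - sqrt 2)/2 + (2 - sqrt 2)/2 = 2 - sqrt 2"
  "(2 - sqrt 2)/2 \<le> sqrt 2 - 1" "(2 - sqrt 2)/2 + (sqrt 2 - 1) = sqrt 2 / 2"
  using r3_bounds s2_bounds unfolding r3_def s2_def by (auto simp: field_simps)

theorem mainTheorem7:
  shows "{(x, y, z). x \<in> bounded_cf 2 1 \<and> y \<in> bounded_cf 2 1 \<and> z \<in> bounded_cf 2 1
            \<and> x \<le> y \<and> x + y = z} =
         {(2 - sqrt 3, (sqrt 3 - 1) / 2, (3 - sqrt 3) / 2),
          ((sqrt 3 - 1) / 2, (sqrt 3 - 1) / 2, sqrt 3 - 1),
          ((2 - sqrt 2) / 2, (2 - sqrt 2) / 2, 2 - sqrt 2),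
          ((2 - sqrt 2) / 2, sqrt 2 - 1, sqrt 2 / 2)}"
  (is "?L = ?R")
proof
  show "?L \<subseteq> ?R"
  proof
    fix t assume "t \<in> ?L"
    then obtain x y z where t: "t = (x, y, z)" and h: "x \<in> bounded_cf 2 1" "y \<in> bounded_cf 2 1"
      "z \<in> bounded_cf 2 1" "x \<le> y" "x + y = z" by auto
    show "t \<in> ?R" using main_sub[OF h] unfolding t by blast
  qed
  show "?R \<subseteq> ?L" using mem_all arith_all by auto
qed

end
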